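(* Let $(X,d)$ be a compact metric space with $\dim X=0$ and let $f\in\mathcal{H}(X)$ be equicontinuous. Then $f$ has the continuous shadowing property.
   Context: $\mathcal{H}(X)$ is the set of homeomorphisms of $X$. $f$ is equicontinuous if for every $\epsilon>0$ there is $\delta>0$ such that $d(x,y)\le\delta$ implies $\sup_{i\in\mathbb{Z}}d(f^i(x),f^i(y))\le\epsilon$. On $X^{\mathbb{Z}}$ use the metric $\tilde d(x,y)=\sup_{i\in\mathbb{Z}}2^{-|i|}d(x_i,y_i)$. For $\delta>0$, $P(f,\delta)\subset X^{\mathbb{Z}}$ is the set of bi-infinite $\delta$-pseudo orbits, i.e. sequences $(x_i)_{i\in\mathbb{Z}}$ with $d(f(x_i),x_{i+1})\le\delta$ for all $i\in\mathbb{Z}$. $f$ has the continuous shadowing property if for every $\epsilon>0$ there are $\delta>0$ and a continuous map $r:P(f,\delta)\to X$ with $d(f^i(r(x)),x_i)\le\epsilon$ for all $x=(x_i)_{i\in\mathbb{Z}}\in P(f,\delta)$ and all $i\in\mathbb{Z}$. *)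

theory Defs
  imports "HOL-Analysis.Analysis"
begin

text \<open>The space X is the whole carrier of a metric-space type 'a.\<close>

definition is_homeo :: "('a::metric_space \<Rightarrow> 'a) \<Rightarrow> bool" where
  "is_homeo f \<longleftrightarrow> (\<exists>g. homeomorphism UNIV UNIV f g)"

definition zpow :: "('a \<Rightarrow> 'a) \<Rightarrow> int \<Rightarrow> 'a \<Rightarrow> 'a" where
  "zpow f i = (if 0 \<le> i then f ^^ nat i else (inv f) ^^ nat (- i))"

text \<open>Zero-dimensionality: a base of clopen sets (small inductive dimension 0).\<close>
definition zero_dimensional :: "'a::topological_space itself \<Rightarrow> bool" where
  "zero_dimensional _ \<longleftrightarrow>
     (\<forall>U (x::'a). open U \<longrightarrow> x \<in> U \<longrightarrow> (\<exists>V. open V \<and> closed V \<and> x \<in> V \<and> V \<subseteq> U))"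

definition equicontinuous :: "('a::metric_space \<Rightarrow> 'a) \<Rightarrow> bool" where
  "equicontinuous f \<longleftrightarrow> (\<forall>\<epsilon>>0. \<exists>\<delta>>0. \<forall>x y. dist x y \<le> \<delta> \<longrightarrow>
       (SUP i. dist (zpow f i x) (zpow f i y)) \<le> \<epsilon>)"

definition seq_dist :: "(int \<Rightarrow> 'a::metric_space) \<Rightarrow> (int \<Rightarrow> 'a) \<Rightarrow> real" where
  "seq_dist x y = (SUP i. (1/2) ^ nat \<bar>i\<bar> * dist (x i) (y i))"

definition pseudo_orbits :: "('a::metric_space \<Rightarrow> 'a) \<Rightarrow> real \<Rightarrow> (int \<Rightarrow> 'a) set" where
  "pseudo_orbits f \<delta> = {x. \<forall>i. dist (f (x i)) (x (i + 1)) \<le> \<delta>}"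

definition seq_continuous_on :: "(int \<Rightarrow> 'a::metric_space) set \<Rightarrow> ((int \<Rightarrow> 'a) \<Rightarrow> 'a) \<Rightarrow> bool" where
  "seq_continuous_on P r \<longleftrightarrow> (\<forall>x\<in>P. \<forall>e>0. \<exists>\<eta>>0. \<forall>y\<in>P. seq_dist x y < \<eta> \<longrightarrow> dist (r x) (r y) < e)"

definition continuous_shadowing :: "('a::metric_space \<Rightarrow> 'a) \<Rightarrow> bool" where
  "continuous_shadowing f \<longleftrightarrow> (\<forall>\<epsilon>>0. \<exists>\<delta>>0. \<exists>r. seq_continuous_on (pseudo_orbits f \<delta>) r \<and>
       (\<forall>x\<in>pseudo_orbits f \<delta>. \<forall>i. dist (zpow f i (r x)) (x i) \<le> \<epsilon>))"

end

theory Submission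
  imports Defs
begin

lemma zpow_succ:
  assumes fg: "\<And>x. f (g x) = x" and gf: "\<And>x. g (f x) = x" and ginv: "inv f = g"
  shows "zpow f (i+1) x = f (zpow f i x)"
proof (cases "0 \<le> i")
  case True
  then have "nat (i+1) = Suc (nat i)" by simp
  then show ?thesis using True by (simp add: zpow_def)
next
  case False
  show ?thesis
  proof (cases "i = -1")
    case True then show ?thesis by (simp add: zpow_def ginv fg)
  next
    case False2: False
    with False have "nat (- i) = Suc (nat (-(i+1)))" "\<not> 0 \<le> i+1" by auto
    then show ?thesis using False by (simp add: zpow_def ginv fg)
  qed
qed

lemma zpow_pred:
  assumes fg: "\<And>x. f (g x) = x" and gf: "\<And>x. g (f x) = x" and ginv: "inv f = g"
  shows "zpow f (i-1) x = g (zpow f i x)"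
  using zpow_succ[OF fg gf ginv, of "i-1" x] gf by simp

lemma zpow_add:
  assumes fg: "\<And>x. f (g x) = x" and gf: "\<And>x. g (f x) = x" and ginv: "inv f = g"
  shows "zpow f (i+j) x = zpow f i (zpow f j x)"
proof (induction i rule: int_induct[where k=0])
  case base
  then show ?case by (simp add: zpow_def)
next
  case (step1 i)
  have "zpow f (i+1+j) x = zpow f ((i+j)+1) x" by (rule arg_cong[where f="\<lambda>k. zpow f k x"]) simp
  also have "\<dots> = f (zpow f (i+j) x)" by (rule zpow_succ[OF fg gf ginv])
  also have "\<dots> = zpow f (i+1) (zpow f j x)" using step1 zpow_succ[OF fg gf ginv] by simp
  finally show ?case .
next
  case (step2 i)
  have "zpow f (i-1+j) x = zpow f ((i+j)-1) x" by (rule arg_cong[where f="\<lambda>k. zpow f k x"]) simp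
  also have "\<dots> = g (zpow f (i+j) x)" by (rule zpow_pred[OF fg gf ginv])
  also have "\<dots> = zpow f (i-1) (zpow f j x)" using step2 zpow_pred[OF fg gf ginv] by simp
  finally show ?case .
qed

lemma clopen_sep:
  fixes V :: "'a::metric_space set"
  assumes "compact (UNIV :: 'a set)" "open V" "closed V"
  shows "\<exists>l>0. \<forall>x y. dist x y < l \<longrightarrow> (x \<in> V \<longleftrightarrow> y \<in> V)"
proof -
  have sub: "(UNIV::'a set) \<subseteq> \<Union>{V, -V}" by auto
  have opn: "\<And>G. G \<in> {V, -V} \<Longrightarrow> open G" using assms(2,3) by (auto simp: open_Compl)
  obtain e where e: "0 < e" "\<And>x. x \<in> UNIV \<Longrightarrow> \<exists>G \<in> {V,-V}. ball x e \<subseteq> G"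
    using Heine_Borel_lemma[OF assms(1) sub opn] by blast
  have "\<forall>x y. dist x y < e \<longrightarrow> (x \<in> V \<longleftrightarrow> y \<in> V)"
  proof (intro allI impI)
    fix x y :: 'a assume d: "dist x y < e"
    then have xy: "x \<in> ball x e" "y \<in> ball x e" using e(1) by auto
    from e(2)[of x] obtain G where G: "G \<in> {V,-V}" "ball x e \<subseteq> G" by blast
    show "x \<in> V \<longleftrightarrow> y \<in> V"
    proof (cases "G = V")
      case True then show ?thesis using xy G by blast
    next
      case False then have "G = -V" using G by blast
      then show ?thesis using xy G by blast
    qed
  qed
  then show ?thesis using e(1) by blast
qed

lemma clopens_sep:
  fixes F :: "'a::metric_space set set"
  assumes "compact (UNIV :: 'a set)" "finite F" "\<And>V. V \<in> F \<Longrightarrow> open V \<and> closed V"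
  shows "\<exists>l>0. \<forall>x y. dist x y < l \<longrightarrow> (\<forall>V\<in>F. x \<in> V \<longleftrightarrow> y \<in> V)"
  using assms(2,3)
proof (induction F rule: finite_induct)
  case empty
  then show ?case by (intro exI[of _ 1]) auto
next
  case (insert W F)
  have pF: "\<And>V. V \<in> F \<Longrightarrow> open V \<and> closed V" using insert.prems by simp
  obtain l where l: "l > 0" "\<forall>x y. dist x y < l \<longrightarrow> (\<forall>V\<in>F. x \<in> V \<longleftrightarrow> y \<in> V)"
    using insert.IH[OF pF] by blast
  have oW: "open W" "closed W" using insert.prems by simp_all
  obtain m where m: "m > 0" "\<forall>x y. dist x y < m \<longrightarrow> (x \<in> W \<longleftrightarrow> y \<in> W)"
    using clopen_sep[OF assms(1) oW] by blast
  have "\<forall>x y. dist x y < min l m \<longrightarrow> (\<forall>V\<in>insert W F. x \<in> V \<longleftrightarrow> y \<in> V)"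
    using l(2) m(2) by simp
  then show ?case using l(1) m(1) by (intro exI[of _ "min l m"]) simp
qed

theorem lemma3p2:
  fixes f :: "'a::metric_space \<Rightarrow> 'a"
  assumes "compact (UNIV :: 'a set)"
    and "zero_dimensional TYPE('a)"
    and "is_homeo f"
    and "equicontinuous f"
  shows "continuous_shadowing f"
proof -
  obtain g where hom: "homeomorphism UNIV UNIV f g" using assms(3) is_homeo_def by blast
  have fg: "\<And>x. f (g x) = x" and gf: "\<And>x. g (f x) = x" using hom unfolding homeomorphism_def by auto
  have ginv: "inv f = g" by (rule inv_equality) (use fg gf in auto)
  have z1: "\<And>x. zpow f 1 x = f x" by (simp add: zpow_def)
  have "bounded (UNIV :: 'a set)" using assms(1) compact_imp_bounded by blast
  then obtain c B where cB: "\<And>y::'a. dist c y \<le> B" unfolding bounded_def by blast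
  have dB: "dist y z \<le> 2*B" for y z :: 'a
    using cB[of y] cB[of z] dist_triangle3[of y z c] by linarith
  show ?thesis unfolding continuous_shadowing_def
  proof (intro allI impI)
    fix \<epsilon> :: real assume ep: "\<epsilon> > 0"
    have zd: "\<forall>U (x::'a). open U \<longrightarrow> x \<in> U \<longrightarrow> (\<exists>V. open V \<and> closed V \<and> x \<in> V \<and> V \<subseteq> U)"
      using assms(2) unfolding zero_dimensional_def .
    have ex: "\<forall>x::'a. \<exists>V. open V \<and> closed V \<and> x \<in> V \<and> V \<subseteq> ball x (\<epsilon>/2)"
    proof
      fix x :: 'a
      have "open (ball x (\<epsilon>/2))" "x \<in> ball x (\<epsilon>/2)" using ep by auto
      then show "\<exists>V. open V \<and> closed V \<and> x \<in> V \<and> V \<subseteq> ball x (\<epsilon>/2)"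
        using zd by simp
    qed
    then have "\<exists>W. \<forall>x::'a. open (W x) \<and> closed (W x) \<and> x \<in> W x \<and> W x \<subseteq> ball x (\<epsilon>/2)"
      by (rule choice)
    then obtain W where W0: "\<forall>x::'a. open (W x) \<and> closed (W x) \<and> x \<in> W x \<and> W x \<subseteq> ball x (\<epsilon>/2)"
      by blast
    note W = W0[rule_format]
    have opW: "\<And>c. c \<in> (UNIV::'a set) \<Longrightarrow> open (W c)" using W by simp
    have cov: "(UNIV::'a set) \<subseteq> (\<Union>c\<in>UNIV. W c)" using W by blast
    obtain T where T: "finite T" "(UNIV::'a set) \<subseteq> (\<Union>c\<in>T. W c)"
      using compactE_image[OF assms(1) opW cov] by metis
    define F where "F = W ` T"
    have Ffin: "finite F" using T F_def by auto
    have Fclo: "\<And>V. V \<in> F \<Longrightarrow> open V \<and> closed V" using W F_def by auto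
    define E where "E = (\<lambda>x y. \<forall>V\<in>F. x \<in> V \<longleftrightarrow> y \<in> V)"
    have Eeps: "dist x y \<le> \<epsilon>" if "E x y" for x y
    proof -
      obtain t where t: "t \<in> T" "x \<in> W t" using T by blast
      then have "y \<in> W t" using that unfolding E_def F_def by auto
      then have "dist t x < \<epsilon>/2" "dist t y < \<epsilon>/2" using t W[of t] by auto
      then show ?thesis using dist_triangle3[of x y t] by linarith
    qed
    obtain l where l: "l > 0" "\<And>x y. dist x y < l \<Longrightarrow> E x y"
      using clopens_sep[OF assms(1) Ffin Fclo] unfolding E_def by blast
    obtain \<delta> where d: "\<delta> > 0" "\<And>x y. dist x y \<le> \<delta> \<Longrightarrow> (SUP i. dist (zpow f i x) (zpow f i y)) \<le> l/2"
    proof -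
      have "l/2 > 0" using l(1) by simp
      then show ?thesis using assms(4) that unfolding equicontinuous_def by blast
    qed
    have dE: "E (zpow f j x) (zpow f j y)" if "dist x y \<le> \<delta>" for x y j
    proof -
      have "dist (zpow f j x) (zpow f j y) \<le> (SUP i. dist (zpow f i x) (zpow f i y))"
      proof (rule cSUP_upper)
        show "bdd_above (range (\<lambda>i. dist (zpow f i x) (zpow f i y)))"
          by (rule bdd_aboveI2[where M="2*B"]) (rule dB)
      qed simp
      then show ?thesis using d(2)[OF that] l by auto
    qed
    have Etrans: "E x y \<Longrightarrow> E y z \<Longrightarrow> E x z" for x y z unfolding E_def by auto
    have Esym: "E x y \<Longrightarrow> E y x" for x y unfolding E_def by auto
    show "\<exists>\<delta>>0. \<exists>r. seq_continuous_on (pseudo_orbits f \<delta>) r \<and>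
       (\<forall>x\<in>pseudo_orbits f \<delta>. \<forall>i. dist (zpow f i (r x)) (x i) \<le> \<epsilon>)"
    proof (intro exI[of _ \<delta>] conjI exI[of _ "\<lambda>x. x 0"] ballI allI)
      show "\<delta> > 0" by (rule d(1))
      show "seq_continuous_on (pseudo_orbits f \<delta>) (\<lambda>x. x 0)"
        unfolding seq_continuous_on_def
      proof (intro ballI allI impI)
        fix x y :: "int \<Rightarrow> 'a" and e :: real assume e: "e > 0"
        show "\<exists>\<eta>>0. \<forall>y\<in>pseudo_orbits f \<delta>. seq_dist x y < \<eta> \<longrightarrow> dist (x 0) (y 0) < e"
        proof (intro exI[of _ e] conjI ballI impI)
          fix y assume "seq_dist x y < e"
          moreover have "dist (x 0) (y 0) \<le> seq_dist x y"
          proof -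
            have "(1/2::real) ^ nat \<bar>0::int\<bar> * dist (x 0) (y 0) \<le> seq_dist x y"
              unfolding seq_dist_def
            proof (rule cSUP_upper)
              show "bdd_above (range (\<lambda>i. (1/2::real) ^ nat \<bar>i\<bar> * dist (x i) (y i)))"
              proof (rule bdd_aboveI2)
                fix i :: int
                have "(1/2::real) ^ nat \<bar>i\<bar> \<le> 1" by (simp add: power_le_one)
                then show "(1/2::real) ^ nat \<bar>i\<bar> * dist (x i) (y i) \<le> 2*B"
                  using dB[of "x i" "y i"] mult_right_mono[of "(1/2::real) ^ nat \<bar>i\<bar>" 1 "dist (x i) (y i)"]
                  by simp
              qed
            qed simp
            then show ?thesis by simp
          qed
          ultimately show "dist (x 0) (y 0) < e" by linarith
        qed (use e in auto)
      qed
      fix x :: "int \<Rightarrow> 'a" and i :: int assume px: "x \<in> pseudo_orbits f \<delta>"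
      then have step: "dist (f (x k)) (x (k+1)) \<le> \<delta>" for k unfolding pseudo_orbits_def by auto
      have main: "\<forall>j. E (zpow f (j+i) (x 0)) (zpow f j (x i))"
      proof (induction i rule: int_induct[where k=0])
        case base then show ?case unfolding E_def by simp
      next
        case (step1 i)
        show ?case
        proof
          fix j
          have a: "E (zpow f (j+1+i) (x 0)) (zpow f (j+1) (x i))" using step1 by blast
          have "zpow f (j+1) (x i) = zpow f j (f (x i))" using zpow_add[OF fg gf ginv, of j 1] z1 by simp
          moreover have "E (zpow f j (f (x i))) (zpow f j (x (i+1)))" using dE[OF step[of i]] by simp
          ultimately have c: "E (zpow f (j+1+i) (x 0)) (zpow f j (x (i+1)))"
            using Etrans[OF a] by simp
          have eq2: "zpow f (j+(i+1)) (x 0) = zpow f (j+1+i) (x 0)"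
            by (rule arg_cong[where f="\<lambda>k. zpow f k (x 0)"]) simp
          show "E (zpow f (j+(i+1)) (x 0)) (zpow f j (x (i+1)))" using c by (simp only: eq2)
        qed
      next
        case (step2 i)
        show ?case
        proof
          fix j
          have a: "E (zpow f (j-1+i) (x 0)) (zpow f (j-1) (x i))" using step2 by blast
          have eq: "zpow f j (x (i-1)) = zpow f (j-1) (f (x (i-1)))" using zpow_add[OF fg gf ginv, of "j-1" 1] z1 by simp
          have b: "E (zpow f (j-1) (f (x (i-1)))) (zpow f (j-1) (x i))" using dE step[of "i-1"] by simp
          have c: "E (zpow f (j-1+i) (x 0)) (zpow f j (x (i-1)))"
            using Etrans[OF a Esym[OF b]] eq by simp
          have eq2: "zpow f (j+(i-1)) (x 0) = zpow f (j-1+i) (x 0)"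
            by (rule arg_cong[where f="\<lambda>k. zpow f k (x 0)"]) simp
          show "E (zpow f (j+(i-1)) (x 0)) (zpow f j (x (i-1)))" using c by (simp only: eq2)
        qed
      qed
      then have "E (zpow f i (x 0)) (x i)" using spec[OF main, of 0] by (simp add: zpow_def)
      then show "dist (zpow f i (x 0)) (x i) \<le> \<epsilon>" by (rule Eeps)
    qed
  qed
qed

end
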